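(* Let $\alpha\in(0,1)$, $\sigma=1-\frac{\alpha}{2}$, and let $c^{(\alpha,\sigma)}_{i,k}$ be the L2-1$_\sigma$ coefficients defined in the context. Let $k\ge0$. Then for sufficiently small temporal stepsize $\tau$: (1) for any one-dimensional grid functions $v^0,\dots,v^{k+1}\in\mathcal{U}_h$, $$\sum_{i=1}^{k+1}c^{(\alpha,\sigma)}_{i,k}\big(v^i-v^{i-1},\sigma v^{k+1}+(1-\sigma)v^k\big)_h\ge\frac12\sum_{i=1}^{k+1}c^{(\alpha,\sigma)}_{i,k}\big(\|v^i\|_h^2-\|v^{i-1}\|_h^2\big);$$ (2) for any two-dimensional grid functions $w^0,\dots,w^{k+1}\in\mathcal{S}^\circ_h$, $$\sum_{i=1}^{k+1}c^{(\alpha,\sigma)}_{i,k}\big(w^i-w^{i-1},\sigma w^{k+1}+(1-\sigma)w^k\big)_{h^2}\ge\frac12\sum_{i=1}^{k+1}c^{(\alpha,\sigma)}_{i,k}\big(\|w^i\|_{L^2_h}^2-\|w^{i-1}\|_{L^2_h}^2\big).$$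
   Context: Time grid: $\tilde a>0$, $T>\tilde a$, $N\in\mathbb{Z}^+$, $\tau=(T-\tilde a)/N$, $t_k=\tilde a+k\tau$, $t_{k+\sigma}=t_k+\sigma\tau$. For $1\le i\le k$: $a^{(\alpha,\sigma)}_{i,k}=(\log\frac{t_{k+\sigma}}{t_{i-1}})^{1-\alpha}-(\log\frac{t_{k+\sigma}}{t_{i}})^{1-\alpha}$, $b^{(\alpha,\sigma)}_{i,k}=\frac{1}{\log\frac{t_{i+1}}{t_{i-1}}}\{\frac{2}{2-\alpha}[(\log\frac{t_{k+\sigma}}{t_{i-1}})^{2-\alpha}-(\log\frac{t_{k+\sigma}}{t_{i}})^{2-\alpha}]-\log\frac{t_i}{t_{i-1}}[(\log\frac{t_{k+\sigma}}{t_{i}})^{1-\alpha}+(\log\frac{t_{k+\sigma}}{t_{i-1}})^{1-\alpha}]\}$. Coefficients: $c^{(\alpha,\sigma)}_{1,0}=\frac{(\log\frac{t_\sigma}{t_0})^{1-\alpha}}{\Gamma(2-\alpha)\log\frac{t_1}{t_0}}$; for $k\ge1$: $c^{(\alpha,\sigma)}_{1,k}=\frac{a^{(\alpha,\sigma)}_{1,k}-b^{(\alpha,\sigma)}_{1,k}}{\Gamma(2-\alpha)\log\frac{t_1}{t_0}}$, $c^{(\alpha,\sigma)}_{i,k}=\frac{a^{(\alpha,\sigma)}_{i,k}+b^{(\alpha,\sigma)}_{i-1,k}-b^{(\alpha,\sigma)}_{i,k}}{\Gamma(2-\alpha)\log\frac{t_i}{t_{i-1}}}$ for $2\le i\le k$,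 $c^{(\alpha,\sigma)}_{k+1,k}=\frac{b^{(\alpha,\sigma)}_{k,k}+(\log\frac{t_{k+\sigma}}{t_k})^{1-\alpha}}{\Gamma(2-\alpha)\log\frac{t_{k+1}}{t_k}}$. One-dimensional grid: $\mathcal{U}_h=\{w=(w_0,\dots,w_M)\}$ on $x_j=a+jh$, $h=(b-a)/M$; $(w,v)_h=h\sum_{j=1}^{M-1}w_jv_j$, $\|w\|_h^2=(w,w)_h$. Two-dimensional grid: $x_j=-L+jh$, $y_k=-L+kh$, $h=2L/M$; $\mathcal{S}^\circ_h$ is the set of grid functions $\{w_{jk}\}_{0\le j,k\le M}$ with $w_{jk}=0$ on the boundary points; $(w,v)_{h^2}=h^2\sum_{j=1}^{M-1}\sum_{k=1}^{M-1}w_{jk}v_{jk}$, $\|w\|^2_{L^2_h}=(w,w)_{h^2}$. *)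

theory Defs
  imports "HOL-Analysis.Analysis"
begin

text \<open>Temporal grid: t_s = a0 + s * tau, tau = (T - a0)/N, a0 = tilde a, for real s (so t_{k+sigma} = tg a0 T N (k + sigma)).\<close>
definition tg :: "real \<Rightarrow> real \<Rightarrow> nat \<Rightarrow> real \<Rightarrow> real" where
  "tg a0 T N s = a0 + s * ((T - a0) / real N)"

definition acoef :: "real \<Rightarrow> real \<Rightarrow> nat \<Rightarrow> real \<Rightarrow> real \<Rightarrow> nat \<Rightarrow> nat \<Rightarrow> real" where
  "acoef a0 T N \<alpha> \<sigma> i k =
     (ln (tg a0 T N (real k + \<sigma>) / tg a0 T N (real i - 1))) powr (1 - \<alpha>)
   - (ln (tg a0 T N (real k + \<sigma>) / tg a0 T N (real i))) powr (1 - \<alpha>)"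

definition bcoef :: "real \<Rightarrow> real \<Rightarrow> nat \<Rightarrow> real \<Rightarrow> real \<Rightarrow> nat \<Rightarrow> nat \<Rightarrow> real" where
  "bcoef a0 T N \<alpha> \<sigma> i k =
     (1 / ln (tg a0 T N (real i + 1) / tg a0 T N (real i - 1))) *
     ( (2 / (2 - \<alpha>)) *
         ((ln (tg a0 T N (real k + \<sigma>) / tg a0 T N (real i - 1))) powr (2 - \<alpha>)
        - (ln (tg a0 T N (real k + \<sigma>) / tg a0 T N (real i))) powr (2 - \<alpha>))
     - ln (tg a0 T N (real i) / tg a0 T N (real i - 1)) *
         ((ln (tg a0 T N (real k + \<sigma>) / tg a0 T N (real i))) powr (1 - \<alpha>)
        + (ln (tg a0 T N (real k + \<sigma>) / tg a0 T N (real i - 1))) powr (1 - \<alpha>)))"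

text \<open>L2-1_sigma coefficients c_{i,k}, meaningful for 1 <= i <= k+1.\<close>
definition ccoef :: "real \<Rightarrow> real \<Rightarrow> nat \<Rightarrow> real \<Rightarrow> real \<Rightarrow> nat \<Rightarrow> nat \<Rightarrow> real" where
  "ccoef a0 T N \<alpha> \<sigma> i k =
    (if k = 0 then
       (ln (tg a0 T N \<sigma> / tg a0 T N 0)) powr (1 - \<alpha>)
         / (Gamma (2 - \<alpha>) * ln (tg a0 T N 1 / tg a0 T N 0))
     else if i = 1 then
       (acoef a0 T N \<alpha> \<sigma> 1 k - bcoef a0 T N \<alpha> \<sigma> 1 k)
         / (Gamma (2 - \<alpha>) * ln (tg a0 T N 1 / tg a0 T N 0))
     else if i = k + 1 then
       (bcoef a0 T N \<alpha> \<sigma> k k + (ln (tg a0 T N (real k + \<sigma>) / tg a0 T N (real k))) powr (1 - \<alpha>))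
         / (Gamma (2 - \<alpha>) * ln (tg a0 T N (real k + 1) / tg a0 T N (real k)))
     else
       (acoef a0 T N \<alpha> \<sigma> i k + bcoef a0 T N \<alpha> \<sigma> (i - 1) k - bcoef a0 T N \<alpha> \<sigma> i k)
         / (Gamma (2 - \<alpha>) * ln (tg a0 T N (real i) / tg a0 T N (real i - 1))))"

text \<open>1D discrete inner product on x_j = a + j h, h = (b-a)/M; grid function = nat => real (indices 0..M).\<close>
definition ip1 :: "real \<Rightarrow> real \<Rightarrow> nat \<Rightarrow> (nat \<Rightarrow> real) \<Rightarrow> (nat \<Rightarrow> real) \<Rightarrow> real" where
  "ip1 a b M w v = ((b - a) / real M) * (\<Sum>j = 1..M - 1. w j * v j)"

definition nrm1sq :: "real \<Rightarrow> real \<Rightarrow> nat \<Rightarrow> (nat \<Rightarrow> real) \<Rightarrow> real" where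
  "nrm1sq a b M w = ip1 a b M w w"

text \<open>2D discrete inner product on x_j = -L + j h, y_k = -L + k h, h = 2L/M.\<close>
definition ip2 :: "real \<Rightarrow> nat \<Rightarrow> (nat \<Rightarrow> nat \<Rightarrow> real) \<Rightarrow> (nat \<Rightarrow> nat \<Rightarrow> real) \<Rightarrow> real" where
  "ip2 L M w v = (2 * L / real M)^2 * (\<Sum>j = 1..M - 1. \<Sum>l = 1..M - 1. w j l * v j l)"

definition nrm2sq :: "real \<Rightarrow> nat \<Rightarrow> (nat \<Rightarrow> nat \<Rightarrow> real) \<Rightarrow> real" where
  "nrm2sq L M w = ip2 L M w w"

definition in_S0 :: "nat \<Rightarrow> (nat \<Rightarrow> nat \<Rightarrow> real) \<Rightarrow> bool" where
  "in_S0 M w \<longleftrightarrow> (\<forall>j l. j \<le> M \<and> l \<le> M \<and> (j = 0 \<or> j = M \<or> l = 0 \<or> l = M) \<longrightarrow> w j l = 0)"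

end

theory Submission
  imports Defs
begin


lemma abel_sum:
  fixes c E :: "nat \<Rightarrow> real"
  shows "(\<Sum>i = 1..n+1. c i * (E (i-1) - E i)) =
     c 1 * E 0 + (\<Sum>i = 1..n. (c (i+1) - c i) * E i) - c (n+1) * E (n+1)"
proof (induction n)
  case 0 then show ?case by (simp add: algebra_simps)
next
  case (Suc n)
  have "(\<Sum>i = 1..Suc n+1. c i * (E (i-1) - E i)) = (\<Sum>i = 1..n+1. c i * (E (i-1) - E i)) + c (n+2) * (E (n+1) - E (n+2))"
    by simp
  also have "\<dots> = c 1 * E 0 + (\<Sum>i = 1..n. (c (i+1) - c i) * E i) - c (n+1) * E (n+1) + c (n+2) * (E (n+1) - E (n+2))"
    using Suc by simp
  also have "\<dots> = c 1 * E 0 + (\<Sum>i = 1..Suc n. (c (i+1) - c i) * E i) - c (Suc n+1) * E (Suc n+1)"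
    by (simp add: algebra_simps)
  finally show ?case .
qed

definition Cond :: "real \<Rightarrow> nat \<Rightarrow> (nat \<Rightarrow> real) \<Rightarrow> bool" where
  "Cond \<sigma> k c \<longleftrightarrow> 0 \<le> c 1 \<and> (\<forall>i. 1 \<le> i \<and> i < k \<longrightarrow> c i \<le> c (i+1)) \<and>
     (if k = 0 then 0 else \<sigma>^2 * c k) \<le> (2*\<sigma> - 1) * c (k+1)"

lemma scalar_ineq:
  fixes c x :: "nat \<Rightarrow> real"
  assumes C: "Cond \<sigma> k c"
  shows "(\<Sum>i = 1..k+1. c i * ((x i - x (i-1)) * (\<sigma> * x (k+1) + (1-\<sigma>) * x k)))
     \<ge> 1/2 * (\<Sum>i = 1..k+1. c i * (x i * x i - x (i-1) * x (i-1)))"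
proof -
  define y where "y = \<sigma> * x (k+1) + (1-\<sigma>) * x k"
  define E where "E j = (y - x j)^2" for j
  define e where "e = x (k+1) - x k"
  have key: "(\<Sum>i = 1..k+1. c i * ((x i - x (i-1)) * y)) - 1/2 * (\<Sum>i = 1..k+1. c i * (x i * x i - x (i-1) * x (i-1)))
     = 1/2 * (\<Sum>i = 1..k+1. c i * (E (i-1) - E i))"
    by (simp add: sum_subtractf[symmetric] sum_distrib_left E_def power2_eq_square algebra_simps)
  have Ek: "E k = \<sigma>^2 * e^2" and Ek1: "E (k+1) = (1-\<sigma>)^2 * e^2"
    by (simp_all add: E_def y_def e_def power2_eq_square algebra_simps)
  have c1: "0 \<le> c 1" and mono: "\<And>i. 1 \<le> i \<Longrightarrow> i < k \<Longrightarrow> c i \<le> c (i+1)"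
    and last: "(if k = 0 then 0 else \<sigma>^2 * c k) \<le> (2*\<sigma> - 1) * c (k+1)"
    using C by (auto simp: Cond_def)
  have E0: "0 \<le> E j" for j by (simp add: E_def)
  have "0 \<le> (\<Sum>i = 1..k+1. c i * (E (i-1) - E i))"
  proof (cases "k = 0")
    case True
    then have "(\<Sum>i = 1..k+1. c i * (E (i-1) - E i)) = c 1 * (E 0 - E 1)" by simp
    also have "\<dots> = c 1 * (\<sigma>^2 * e^2 - (1-\<sigma>)^2 * e^2)" using True Ek Ek1 by simp
    also have "\<dots> = ((2*\<sigma> - 1) * c 1) * e^2" by (simp add: power2_eq_square algebra_simps)
    also have "\<dots> \<ge> 0" using last True by simp
    finally show ?thesis .
  next
    case False
    then obtain m where km: "k = Suc m" by (cases k) auto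
    have "(\<Sum>i = 1..k+1. c i * (E (i-1) - E i)) =
       c 1 * E 0 + (\<Sum>i = 1..m. (c (i+1) - c i) * E i) + ((c (k+1) - c k) * E k - c (k+1) * E (k+1))"
      unfolding abel_sum by (simp add: km)
    also have "(c (k+1) - c k) * E k - c (k+1) * E (k+1) = ((2*\<sigma> - 1) * c (k+1) - \<sigma>^2 * c k) * e^2"
      unfolding Ek Ek1 by (simp add: power2_eq_square algebra_simps)
    finally have eq: "(\<Sum>i = 1..k+1. c i * (E (i-1) - E i)) =
       c 1 * E 0 + (\<Sum>i = 1..m. (c (i+1) - c i) * E i) + ((2*\<sigma> - 1) * c (k+1) - \<sigma>^2 * c k) * e^2" .
    have "0 \<le> (\<Sum>i = 1..m. (c (i+1) - c i) * E i)"
      by (rule sum_nonneg) (use mono E0 km in auto)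
    moreover have "0 \<le> ((2*\<sigma> - 1) * c (k+1) - \<sigma>^2 * c k) * e^2" using last False by simp
    moreover have "0 \<le> c 1 * E 0" using c1 E0 by simp
    ultimately show ?thesis unfolding eq by linarith
  qed
  with key show ?thesis unfolding y_def by linarith
qed

lemma grid1:
  assumes C: "Cond \<sigma> k c" and ab: "a < b"
  shows "(\<Sum>i = 1..k + 1. c i *
            ip1 a b M (\<lambda>j. v i j - v (i - 1) j) (\<lambda>j. \<sigma> * v (k + 1) j + (1 - \<sigma>) * v k j))
        \<ge> 1 / 2 * (\<Sum>i = 1..k + 1. c i *
            (nrm1sq a b M (v i) - nrm1sq a b M (v (i - 1))))"
proof -
  define h where "h = (b - a) / real M"
  have h0: "0 \<le> h" using ab by (simp add: h_def)
  have L: "(\<Sum>i = 1..k + 1. c i *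
            ip1 a b M (\<lambda>j. v i j - v (i - 1) j) (\<lambda>j. \<sigma> * v (k + 1) j + (1 - \<sigma>) * v k j))
     = h * (\<Sum>j = 1..M-1. \<Sum>i = 1..k + 1. c i * ((v i j - v (i - 1) j) * (\<sigma> * v (k + 1) j + (1 - \<sigma>) * v k j)))"
    unfolding ip1_def h_def[symmetric] sum_distrib_left
    by (subst sum.swap) (simp add: algebra_simps)
  have R: "(\<Sum>i = 1..k + 1. c i * (nrm1sq a b M (v i) - nrm1sq a b M (v (i - 1))))
     = h * (\<Sum>j = 1..M-1. \<Sum>i = 1..k + 1. c i * (v i j * v i j - v (i - 1) j * v (i - 1) j))"
    unfolding nrm1sq_def ip1_def h_def[symmetric] sum_distrib_left
    by (subst sum.swap) (simp add: algebra_simps sum_subtractf sum_distrib_left)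
  have "1/2 * (\<Sum>j = 1..M-1. \<Sum>i = 1..k + 1. c i * (v i j * v i j - v (i - 1) j * v (i - 1) j))
     \<le> (\<Sum>j = 1..M-1. \<Sum>i = 1..k + 1. c i * ((v i j - v (i - 1) j) * (\<sigma> * v (k + 1) j + (1 - \<sigma>) * v k j)))"
    unfolding sum_distrib_left
    by (rule sum_mono) (rule scalar_ineq[OF C, of "\<lambda>i. v i _", simplified sum_distrib_left])
  then have "h * (1/2 * (\<Sum>j = 1..M-1. \<Sum>i = 1..k + 1. c i * (v i j * v i j - v (i - 1) j * v (i - 1) j)))
     \<le> h * (\<Sum>j = 1..M-1. \<Sum>i = 1..k + 1. c i * ((v i j - v (i - 1) j) * (\<sigma> * v (k + 1) j + (1 - \<sigma>) * v k j)))"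
    by (rule mult_left_mono[OF _ h0])
  then show ?thesis unfolding L R by (simp add: algebra_simps)
qed

lemma grid2:
  assumes C: "Cond \<sigma> k c" and L0: "0 < L"
  shows "(\<Sum>i = 1..k + 1. c i *
            ip2 L M (\<lambda>j l. w i j l - w (i - 1) j l) (\<lambda>j l. \<sigma> * w (k + 1) j l + (1 - \<sigma>) * w k j l))
        \<ge> 1 / 2 * (\<Sum>i = 1..k + 1. c i *
            (nrm2sq L M (w i) - nrm2sq L M (w (i - 1))))"
proof -
  define h where "h = (2 * L / real M)^2"
  have h0: "0 \<le> h" by (simp add: h_def)
  define P where "P = (SIGMA j:{1..M-1}. {1..M-1})"
  have fP: "finite P" by (simp add: P_def)
  have ip: "ip2 L M x y = h * (\<Sum>p\<in>P. x (fst p) (snd p) * y (fst p) (snd p))" for x y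
    unfolding ip2_def h_def[symmetric] P_def by (simp add: sum.Sigma split_beta)
  have Lq: "(\<Sum>i = 1..k + 1. c i *
            ip2 L M (\<lambda>j l. w i j l - w (i - 1) j l) (\<lambda>j l. \<sigma> * w (k + 1) j l + (1 - \<sigma>) * w k j l))
     = h * (\<Sum>p\<in>P. \<Sum>i = 1..k + 1. c i * ((w i (fst p) (snd p) - w (i - 1) (fst p) (snd p)) * (\<sigma> * w (k + 1) (fst p) (snd p) + (1 - \<sigma>) * w k (fst p) (snd p))))"
    unfolding ip sum_distrib_left
    by (subst sum.swap) (simp add: algebra_simps)
  have R: "(\<Sum>i = 1..k + 1. c i * (nrm2sq L M (w i) - nrm2sq L M (w (i - 1))))
     = h * (\<Sum>p\<in>P. \<Sum>i = 1..k + 1. c i * (w i (fst p) (snd p) * w i (fst p) (snd p) - w (i - 1) (fst p) (snd p) * w (i - 1) (fst p) (snd p)))"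
    unfolding nrm2sq_def ip sum_distrib_left
    by (subst sum.swap) (simp add: algebra_simps sum_subtractf sum_distrib_left)
  have "1/2 * (\<Sum>p\<in>P. \<Sum>i = 1..k + 1. c i * (w i (fst p) (snd p) * w i (fst p) (snd p) - w (i - 1) (fst p) (snd p) * w (i - 1) (fst p) (snd p)))
     \<le> (\<Sum>p\<in>P. \<Sum>i = 1..k + 1. c i * ((w i (fst p) (snd p) - w (i - 1) (fst p) (snd p)) * (\<sigma> * w (k + 1) (fst p) (snd p) + (1 - \<sigma>) * w k (fst p) (snd p))))"
    unfolding sum_distrib_left
    by (rule sum_mono) (rule scalar_ineq[OF C, of "\<lambda>i. w i (fst _) (snd _)", simplified sum_distrib_left])
  then have "h * (1/2 * (\<Sum>p\<in>P. \<Sum>i = 1..k + 1. c i * (w i (fst p) (snd p) * w i (fst p) (snd p) - w (i - 1) (fst p) (snd p) * w (i - 1) (fst p) (snd p))))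
     \<le> h * (\<Sum>p\<in>P. \<Sum>i = 1..k + 1. c i * ((w i (fst p) (snd p) - w (i - 1) (fst p) (snd p)) * (\<sigma> * w (k + 1) (fst p) (snd p) + (1 - \<sigma>) * w k (fst p) (snd p))))"
    by (rule mult_left_mono[OF _ h0])
  then show ?thesis unfolding Lq R by (simp add: algebra_simps)
qed


definition "FF \<alpha> r = r powr (1-\<alpha>)"
definition "ff \<alpha> r = (1-\<alpha>) * r powr (-\<alpha>)"
definition "ff' \<alpha> r = (1-\<alpha>) * (-\<alpha>) * r powr (-\<alpha>-1)"
definition "GG \<alpha> r = r powr (2-\<alpha>) / (2-\<alpha>)"
definition "bb \<alpha> r = GG \<alpha> (r+1) - GG \<alpha> r - (FF \<alpha> r + FF \<alpha> (r+1))/2"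
definition "HH \<alpha> x = FF \<alpha> (x+1) - FF \<alpha> x + bb \<alpha> (x+1) - bb \<alpha> x"

lemma dF: "0 < r \<Longrightarrow> (FF \<alpha> has_real_derivative ff \<alpha> r) (at r)"
  unfolding FF_def ff_def
  using has_real_derivative_powr[of r "1-\<alpha>"] by simp

lemma dff: "0 < r \<Longrightarrow> (ff \<alpha> has_real_derivative ff' \<alpha> r) (at r)"
proof -
  assume r: "0 < r"
  have "((\<lambda>r. (1-\<alpha>) * r powr (-\<alpha>)) has_real_derivative (1-\<alpha>) * ((-\<alpha>) * r powr (-\<alpha>-1))) (at r)"
    by (intro DERIV_cmult has_real_derivative_powr r)
  then show ?thesis unfolding ff_def[abs_def] ff'_def by (simp add: mult.assoc)
qed

lemma dG: "0 < r \<Longrightarrow> \<alpha> < 2 \<Longrightarrow> (GG \<alpha> has_real_derivative FF \<alpha> r) (at r)"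
proof -
  assume r: "0 < r" and a: "\<alpha> < 2"
  have "((\<lambda>r. r powr (2-\<alpha>) / (2-\<alpha>)) has_real_derivative ((2-\<alpha>) * r powr (2-\<alpha>-1)) / (2-\<alpha>)) (at r)"
    by (intro DERIV_cdivide has_real_derivative_powr r)
  moreover have "((2-\<alpha>) * r powr (2-\<alpha>-1)) / (2-\<alpha>) = r powr (1-\<alpha>)" using a by (simp add: diff_diff_eq2)
  ultimately show ?thesis unfolding GG_def[abs_def] FF_def by simp
qed

lemma chain_pos:
  assumes "\<And>r. 0 < r \<Longrightarrow> (h has_real_derivative h' r) (at r)"
    and "(g has_real_derivative g') (at x)" and "0 < g x"
  shows "((\<lambda>x. h (g x)) has_real_derivative h' (g x) * g') (at x)"
  using DERIV_chain2[OF assms(1)[OF assms(3)] assms(2)] .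

lemma mvt_anti:
  fixes g g' :: "real \<Rightarrow> real"
  assumes yz: "y < z" and d: "\<And>x. y \<le> x \<Longrightarrow> x \<le> z \<Longrightarrow> (g has_real_derivative g' x) (at x)"
    and m: "\<And>x x'. y \<le> x \<Longrightarrow> x < x' \<Longrightarrow> x' \<le> z \<Longrightarrow> g' x' < g' x"
  shows "(z-y) * g' z < g z - g y" "g z - g y < (z-y) * g' y"
proof -
  obtain \<xi> where \<xi>: "y < \<xi>" "\<xi> < z" "g z - g y = (z - y) * g' \<xi>"
    using MVT2[OF yz d] by blast
  have "g' z < g' \<xi>" "g' \<xi> < g' y" using m \<xi> by auto
  then show "(z-y) * g' z < g z - g y" "g z - g y < (z-y) * g' y"
    using \<xi>(3) yz by (simp_all add: mult_strict_left_mono)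
qed

lemma mvt_mono:
  fixes g g' :: "real \<Rightarrow> real"
  assumes yz: "y < z" and d: "\<And>x. y \<le> x \<Longrightarrow> x \<le> z \<Longrightarrow> (g has_real_derivative g' x) (at x)"
    and m: "\<And>x x'. y \<le> x \<Longrightarrow> x < x' \<Longrightarrow> x' \<le> z \<Longrightarrow> g' x < g' x'"
  shows "(z-y) * g' y < g z - g y" "g z - g y < (z-y) * g' z"
proof -
  obtain \<xi> where \<xi>: "y < \<xi>" "\<xi> < z" "g z - g y = (z - y) * g' \<xi>"
    using MVT2[OF yz d] by blast
  have "g' \<xi> < g' z" "g' y < g' \<xi>" using m \<xi> by auto
  then show "(z-y) * g' y < g z - g y" "g z - g y < (z-y) * g' z"
    using \<xi>(3) yz by (simp_all add: mult_strict_left_mono)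
qed

lemma dFs: "0 < x + c \<Longrightarrow> ((\<lambda>x. FF \<alpha> (x + c)) has_real_derivative ff \<alpha> (x + c)) (at x)"
proof -
  assume "0 < x + c"
  moreover have "((\<lambda>x. x + c) has_real_derivative 1) (at x)" by (auto intro!: derivative_eq_intros)
  ultimately show ?thesis using chain_pos[of "FF \<alpha>" "ff \<alpha>" "\<lambda>x. x + c" 1 x] dF by simp
qed
lemma dffs: "0 < x + c \<Longrightarrow> ((\<lambda>x. ff \<alpha> (x + c)) has_real_derivative ff' \<alpha> (x + c)) (at x)"
proof -
  assume "0 < x + c"
  moreover have "((\<lambda>x. x + c) has_real_derivative 1) (at x)" by (auto intro!: derivative_eq_intros)
  ultimately show ?thesis using chain_pos[of "ff \<alpha>" "ff' \<alpha>" "\<lambda>x. x + c" 1 x] dff by simp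
qed
lemma dGs: "0 < x + c \<Longrightarrow> \<alpha> < 2 \<Longrightarrow> ((\<lambda>x. GG \<alpha> (x + c)) has_real_derivative FF \<alpha> (x + c)) (at x)"
proof -
  assume "0 < x + c" "\<alpha> < 2"
  moreover have "((\<lambda>x. x + c) has_real_derivative 1) (at x)" by (auto intro!: derivative_eq_intros)
  ultimately show ?thesis using chain_pos[of "GG \<alpha>" "FF \<alpha>" "\<lambda>x. x + c" 1 x] dG by simp
qed

context
  fixes \<alpha> :: real
  assumes a0: "0 < \<alpha>" and a1: "\<alpha> < 1"
begin

lemma ff_dec: "0 < x \<Longrightarrow> x < y \<Longrightarrow> ff \<alpha> y < ff \<alpha> x"
  unfolding ff_def using a0 a1 by (simp add: powr_less_mono2_neg)

lemma ff'_inc: "0 < x \<Longrightarrow> x < y \<Longrightarrow> ff' \<alpha> x < ff' \<alpha> y"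
proof -
  assume "0 < x" "x < y"
  then have "y powr (-\<alpha>-1) < x powr (-\<alpha>-1)" using a0 by (intro powr_less_mono2_neg) auto
  moreover have "(1-\<alpha>) * (-\<alpha>) < 0" using a0 a1 by (simp add: mult_pos_neg)
  ultimately show ?thesis unfolding ff'_def by (simp add: mult_strict_left_mono)
qed

lemma FF_inc: "0 \<le> x \<Longrightarrow> x < y \<Longrightarrow> FF \<alpha> x < FF \<alpha> y"
  unfolding FF_def using a1 by (simp add: powr_less_mono2)

lemma FF_diff: assumes "0 < r" "0 < t"
  shows "t * ff \<alpha> (r+t) < FF \<alpha> (r+t) - FF \<alpha> r" "FF \<alpha> (r+t) - FF \<alpha> r < t * ff \<alpha> r"
  using mvt_anti[of r "r+t" "FF \<alpha>" "ff \<alpha>"] assms dF ff_dec by auto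

lemma ff_diff: assumes "0 < r" "0 < t"
  shows "t * ff' \<alpha> r < ff \<alpha> (r+t) - ff \<alpha> r" "ff \<alpha> (r+t) - ff \<alpha> r < t * ff' \<alpha> (r+t)"
  using mvt_mono[of r "r+t" "ff \<alpha>" "ff' \<alpha>"] assms dff ff'_inc by auto

lemma GG_diff: assumes "0 < r"
  shows "GG \<alpha> (r+1) - GG \<alpha> r < FF \<alpha> (r+1)"
  using mvt_mono(2)[of r "r+1" "GG \<alpha>" "FF \<alpha>"] assms dG a1 FF_inc by auto


lemma bb_nonneg: assumes r: "0 < r" shows "0 \<le> bb \<alpha> r"
proof -
  define \<phi> where "\<phi> t = GG \<alpha> (t + r) - GG \<alpha> r - t * (FF \<alpha> r + FF \<alpha> (t + r)) / 2" for t
  have "\<phi> 0 \<le> \<phi> 1"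
  proof (rule DERIV_nonneg_imp_nondecreasing[of 0 1 \<phi>])
    fix t :: real assume t: "0 \<le> t" "t \<le> 1"
    have "(\<phi> has_real_derivative FF \<alpha> (t + r) - ((FF \<alpha> r + FF \<alpha> (t + r)) + t * ff \<alpha> (t + r)) / 2) (at t)"
      unfolding \<phi>_def[abs_def] using t r a1
      by (auto intro!: derivative_eq_intros dGs dFs simp: field_simps)
    moreover have "0 \<le> FF \<alpha> (t + r) - ((FF \<alpha> r + FF \<alpha> (t + r)) + t * ff \<alpha> (t + r)) / 2"
    proof (cases "t = 0")
      case False
      then have "t * ff \<alpha> (r+t) < FF \<alpha> (r+t) - FF \<alpha> r" using FF_diff(1)[OF r] t by auto
      then show ?thesis by (simp add: add.commute)
    qed simp
    ultimately show "\<exists>y. (\<phi> has_real_derivative y) (at t) \<and> 0 \<le> y" by blast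
  qed simp
  then show ?thesis by (simp add: \<phi>_def bb_def add.commute)
qed

lemma bb_dec: assumes r: "0 < r" shows "bb \<alpha> (r+1) \<le> bb \<alpha> r"
proof -
  have "bb \<alpha> (r+1) \<le> bb \<alpha> r" if "r \<le> r + 1"
  proof (rule DERIV_nonpos_imp_nonincreasing[OF that])
    fix y :: real assume y: "r \<le> y" "y \<le> r + 1"
    then have y0: "0 < y" using r by simp
    have "(bb \<alpha> has_real_derivative FF \<alpha> (y+1) - FF \<alpha> y - (ff \<alpha> y + ff \<alpha> (y+1))/2) (at y)"
    proof -
      have "((\<lambda>y. GG \<alpha> (y+1) - GG \<alpha> (y+0) - (FF \<alpha> (y+0) + FF \<alpha> (y+1))/2) has_real_derivative
          FF \<alpha> (y+1) - FF \<alpha> (y+0) - (ff \<alpha> (y+0) + ff \<alpha> (y+1))/2) (at y)"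
        using y0 a1 by (auto intro!: derivative_eq_intros dGs dFs dG dF)
      then show ?thesis by (simp add: bb_def[abs_def])
    qed
    moreover have "FF \<alpha> (y+1) - FF \<alpha> y - (ff \<alpha> y + ff \<alpha> (y+1))/2 \<le> 0"
    proof -
      define \<psi> where "\<psi> t = FF \<alpha> (t + y) - FF \<alpha> y - t * (ff \<alpha> y + ff \<alpha> (t + y)) / 2" for t
      have "\<psi> 1 \<le> \<psi> 0"
      proof (rule DERIV_nonpos_imp_nonincreasing[of 0 1 \<psi>])
        fix t :: real assume t: "0 \<le> t" "t \<le> 1"
        have "(\<psi> has_real_derivative ff \<alpha> (t + y) - ((ff \<alpha> y + ff \<alpha> (t + y)) + t * ff' \<alpha> (t + y)) / 2) (at t)"
          unfolding \<psi>_def[abs_def] using t y0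
          by (auto intro!: derivative_eq_intros dffs dFs simp: field_simps)
        moreover have "ff \<alpha> (t + y) - ((ff \<alpha> y + ff \<alpha> (t + y)) + t * ff' \<alpha> (t + y)) / 2 \<le> 0"
        proof (cases "t = 0")
          case False
          then have "ff \<alpha> (y+t) - ff \<alpha> y < t * ff' \<alpha> (y+t)" using ff_diff(2)[OF y0] t by auto
          then show ?thesis by (simp add: add.commute)
        qed simp
        ultimately show "\<exists>z. (\<psi> has_real_derivative z) (at t) \<and> z \<le> 0" by blast
      qed simp
      then show ?thesis by (simp add: \<psi>_def add.commute)
    qed
    ultimately show "\<exists>z. (bb \<alpha> has_real_derivative z) (at y) \<and> z \<le> 0" by blast
  qed
  then show ?thesis by simp
qed

lemma HH_dec: assumes "0 < x" "x < z" shows "HH \<alpha> z < HH \<alpha> x"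
proof (rule DERIV_neg_imp_decreasing[OF assms(2)])
  fix y assume y: "x \<le> y" "y \<le> z"
  then have y0: "0 < y" using assms by simp
  define D where "D = ff \<alpha> (y+1) - ff \<alpha> (y+0) + ((FF \<alpha> (y+2) - FF \<alpha> (y+1) - (ff \<alpha> (y+1) + ff \<alpha> (y+2))/2)
       - (FF \<alpha> (y+1) - FF \<alpha> (y+0) - (ff \<alpha> (y+0) + ff \<alpha> (y+1))/2))"
  have "((\<lambda>y. FF \<alpha> (y+1) - FF \<alpha> (y+0) + ((GG \<alpha> (y+2) - GG \<alpha> (y+1) - (FF \<alpha> (y+1) + FF \<alpha> (y+2))/2)
       - (GG \<alpha> (y+1) - GG \<alpha> (y+0) - (FF \<alpha> (y+0) + FF \<alpha> (y+1))/2))) has_real_derivative D) (at y)"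
    unfolding D_def using y0 a1 by (auto intro!: derivative_eq_intros dGs dFs dG dF simp: field_simps)
  moreover have "(\<lambda>y. FF \<alpha> (y+1) - FF \<alpha> (y+0) + ((GG \<alpha> (y+2) - GG \<alpha> (y+1) - (FF \<alpha> (y+1) + FF \<alpha> (y+2))/2)
       - (GG \<alpha> (y+1) - GG \<alpha> (y+0) - (FF \<alpha> (y+0) + FF \<alpha> (y+1))/2))) = HH \<alpha>"
    by (auto simp: fun_eq_iff HH_def bb_def add.assoc)
  ultimately have d: "(HH \<alpha> has_real_derivative D) (at y)" by simp
  have y1: "0 < y + 1" using y0 by simp
  have e1: "FF \<alpha> (y+1+1) - FF \<alpha> (y+1) < 1 * ff \<alpha> (y+1)" using FF_diff(2)[OF y1, of 1] by simp
  have e2: "1 * ff \<alpha> (y+1) < FF \<alpha> (y+1) - FF \<alpha> y" using FF_diff(1)[OF y0, of 1] by simp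
  have e3: "1 * ff' \<alpha> (y+1) < ff \<alpha> (y+1+1) - ff \<alpha> (y+1)" using ff_diff(1)[OF y1, of 1] by simp
  have e4: "ff \<alpha> (y+1) - ff \<alpha> y < 1 * ff' \<alpha> (y+1)" using ff_diff(2)[OF y0, of 1] by simp
  have "y + 1 + 1 = y + 2" by simp
  then have "D < 0" using e1 e2 e3 e4 unfolding D_def by (simp add: field_simps)
  with d show "\<exists>D. (HH \<alpha> has_real_derivative D) (at y) \<and> D < 0" by blast
qed

end


definition Ag :: "(real \<Rightarrow> real \<Rightarrow> real) \<Rightarrow> real \<Rightarrow> real \<Rightarrow> nat \<Rightarrow> nat \<Rightarrow> real" where
  "Ag L \<alpha> \<sigma> i k = L (real k + \<sigma>) (real i - 1) powr (1 - \<alpha>) - L (real k + \<sigma>) (real i) powr (1 - \<alpha>)"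

definition Bg :: "(real \<Rightarrow> real \<Rightarrow> real) \<Rightarrow> real \<Rightarrow> real \<Rightarrow> nat \<Rightarrow> nat \<Rightarrow> real" where
  "Bg L \<alpha> \<sigma> i k = (1 / L (real i + 1) (real i - 1)) *
     ((2 / (2 - \<alpha>)) * (L (real k + \<sigma>) (real i - 1) powr (2 - \<alpha>) - L (real k + \<sigma>) (real i) powr (2 - \<alpha>))
     - L (real i) (real i - 1) * (L (real k + \<sigma>) (real i) powr (1 - \<alpha>) + L (real k + \<sigma>) (real i - 1) powr (1 - \<alpha>)))"

definition Cg :: "(real \<Rightarrow> real \<Rightarrow> real) \<Rightarrow> real \<Rightarrow> real \<Rightarrow> nat \<Rightarrow> nat \<Rightarrow> real" where
  "Cg L \<alpha> \<sigma> i k =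
    (if k = 0 then L \<sigma> 0 powr (1 - \<alpha>) / (Gamma (2 - \<alpha>) * L 1 0)
     else if i = 1 then (Ag L \<alpha> \<sigma> 1 k - Bg L \<alpha> \<sigma> 1 k) / (Gamma (2 - \<alpha>) * L 1 0)
     else if i = k + 1 then (Bg L \<alpha> \<sigma> k k + L (real k + \<sigma>) (real k) powr (1 - \<alpha>))
         / (Gamma (2 - \<alpha>) * L (real k + 1) (real k))
     else (Ag L \<alpha> \<sigma> i k + Bg L \<alpha> \<sigma> (i - 1) k - Bg L \<alpha> \<sigma> i k)
         / (Gamma (2 - \<alpha>) * L (real i) (real i - 1)))"

lemma ccoef_Cg: "ccoef a0 T N \<alpha> \<sigma> i k = Cg (\<lambda>x y. ln (tg a0 T N x / tg a0 T N y)) \<alpha> \<sigma> i k"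
  unfolding ccoef_def Cg_def acoef_def bcoef_def Ag_def Bg_def by simp

lemma powr_split1: "0 < (c::real) \<Longrightarrow> c powr (1 - \<alpha>) = c * c powr (-\<alpha>)"
  using powr_add[of c 1 "-\<alpha>"] by simp
lemma powr_split2: "0 < (c::real) \<Longrightarrow> c powr (2 - \<alpha>) = c * c * c powr (-\<alpha>)"
  using powr_add[of c 2 "-\<alpha>"] by (simp add: powr_numeral power2_eq_square)

lemma Cg_scale:
  assumes c: "0 < c" and s: "0 < \<sigma>" and i: "1 \<le> i" "i \<le> k + 1"
    and L: "\<And>x y. 0 \<le> y \<Longrightarrow> y < x \<Longrightarrow> 0 < L x y" and a: "\<alpha> < 2"
  shows "Cg (\<lambda>x y. c * L x y) \<alpha> \<sigma> i k = c powr (-\<alpha>) * Cg L \<alpha> \<sigma> i k"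
proof -
  have pm: "(c * L x y) powr e = c powr e * L x y powr e" if "0 \<le> y" "y < x" for x y e
    using L[OF that] c by (simp add: powr_mult)
  note P = pm powr_split1[OF c] powr_split2[OF c]
  have ne: "L x y \<noteq> 0" if "0 \<le> y" "y < x" for x y using L[OF that] by simp
  have G: "Gamma (2 - \<alpha>) \<noteq> 0" using a by (simp add: Gamma_real_pos less_imp_neq[symmetric])
  have cpos: "c powr (-\<alpha>) > 0" using c by simp
  show ?thesis
  proof (cases "k = 0")
    case True
    then show ?thesis using s c G ne[of 0 1] by (simp add: Cg_def P field_simps)
  next
    case k: False
    show ?thesis
    proof (cases "i = 1")
      case True
      have A: "Ag (\<lambda>x y. c * L x y) \<alpha> \<sigma> 1 k = c * c powr (-\<alpha>) * Ag L \<alpha> \<sigma> 1 k"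
        using s k by (simp add: Ag_def P algebra_simps)
      have B: "Bg (\<lambda>x y. c * L x y) \<alpha> \<sigma> 1 k = c * c powr (-\<alpha>) * Bg L \<alpha> \<sigma> 1 k"
        using s k c a ne[of 0 2] by (simp add: Bg_def P field_simps)
      show ?thesis unfolding True Cg_def A B using k c G ne[of 0 1] by (simp add: field_simps)
    next
      case i1: False
      show ?thesis
      proof (cases "i = k + 1")
        case True
        have B: "Bg (\<lambda>x y. c * L x y) \<alpha> \<sigma> k k = c * c powr (-\<alpha>) * Bg L \<alpha> \<sigma> k k"
          using s k c a ne[of "real k - 1" "real k + 1"] by (simp add: Bg_def P field_simps)
        show ?thesis using True k i1 c G s ne[of "real k" "real k + 1"] by (simp add: Cg_def B P field_simps)
      next
        case False
        then have ik: "i \<le> k" "2 \<le> i" using i i1 by auto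
        have A: "Ag (\<lambda>x y. c * L x y) \<alpha> \<sigma> i k = c * c powr (-\<alpha>) * Ag L \<alpha> \<sigma> i k"
          using s ik by (simp add: Ag_def P algebra_simps)
        have B: "Bg (\<lambda>x y. c * L x y) \<alpha> \<sigma> i k = c * c powr (-\<alpha>) * Bg L \<alpha> \<sigma> i k"
          using s ik c a ne[of "real i - 1" "real i + 1"] by (simp add: Bg_def P field_simps)
        have B': "Bg (\<lambda>x y. c * L x y) \<alpha> \<sigma> (i-1) k = c * c powr (-\<alpha>) * Bg L \<alpha> \<sigma> (i-1) k"
          using s ik c a ne[of "real (i-1) - 1" "real (i-1) + 1"] by (simp add: Bg_def P field_simps of_nat_diff)
        show ?thesis unfolding Cg_def A B B' using False k i1 i c G s ne[of "real i - 1" "real i"] by (simp add: field_simps)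
      qed
    qed
  qed
qed

lemma Ag_tendsto:
  assumes lim: "\<And>x y. ((\<lambda>n. LL n x y) \<longlongrightarrow> x - y) F" and s: "0 < \<sigma>" and i: "i \<le> k"
  shows "((\<lambda>n. Ag (LL n) \<alpha> \<sigma> i k) \<longlongrightarrow> Ag (\<lambda>x y. x - y) \<alpha> \<sigma> i k) F"
  unfolding Ag_def using s i by (intro tendsto_intros lim) auto

lemma Bg_tendsto:
  assumes lim: "\<And>x y. ((\<lambda>n. LL n x y) \<longlongrightarrow> x - y) F" and s: "0 < \<sigma>" and i: "i \<le> k"
  shows "((\<lambda>n. Bg (LL n) \<alpha> \<sigma> i k) \<longlongrightarrow> Bg (\<lambda>x y. x - y) \<alpha> \<sigma> i k) F"
  unfolding Bg_def using s i by (intro tendsto_intros lim) auto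

lemma Cg_tendsto:
  assumes lim: "\<And>x y. ((\<lambda>n. LL n x y) \<longlongrightarrow> x - y) F" and s: "0 < \<sigma>" and i: "1 \<le> i" "i \<le> k + 1"
    and a: "\<alpha> < 2"
  shows "((\<lambda>n. Cg (LL n) \<alpha> \<sigma> i k) \<longlongrightarrow> Cg (\<lambda>x y. x - y) \<alpha> \<sigma> i k) F"
proof -
  have G: "Gamma (2 - \<alpha>) \<noteq> 0" using a by (simp add: Gamma_real_pos less_imp_neq[symmetric])
  show ?thesis
  proof (cases "k = 0")
    case True
    have "((\<lambda>n. LL n \<sigma> 0 powr (1 - \<alpha>) / (Gamma (2 - \<alpha>) * LL n 1 0)) \<longlongrightarrow>
       (\<sigma> - 0) powr (1 - \<alpha>) / (Gamma (2 - \<alpha>) * (1 - 0))) F"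
      using s G by (intro tendsto_intros lim) auto
    then show ?thesis using True unfolding Cg_def by simp
  next
    case k: False
    show ?thesis
    proof (cases "i = 1")
      case True
      have "((\<lambda>n. (Ag (LL n) \<alpha> \<sigma> 1 k - Bg (LL n) \<alpha> \<sigma> 1 k) / (Gamma (2 - \<alpha>) * LL n 1 0)) \<longlongrightarrow>
         (Ag (\<lambda>x y. x - y) \<alpha> \<sigma> 1 k - Bg (\<lambda>x y. x - y) \<alpha> \<sigma> 1 k) / (Gamma (2 - \<alpha>) * (1 - 0))) F"
        using s G k by (intro tendsto_intros lim Ag_tendsto Bg_tendsto) auto
      then show ?thesis unfolding True Cg_def using k by simp
    next
      case i1: False
      show ?thesis
      proof (cases "i = k + 1")
        case True
        have "((\<lambda>n. (Bg (LL n) \<alpha> \<sigma> k k + LL n (real k + \<sigma>) (real k) powr (1 - \<alpha>))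
         / (Gamma (2 - \<alpha>) * LL n (real k + 1) (real k))) \<longlongrightarrow>
         (Bg (\<lambda>x y. x - y) \<alpha> \<sigma> k k + (real k + \<sigma> - real k) powr (1 - \<alpha>))
         / (Gamma (2 - \<alpha>) * (real k + 1 - real k))) F"
          using s G k by (intro tendsto_intros lim Ag_tendsto Bg_tendsto) auto
        then show ?thesis unfolding True Cg_def using k by simp
      next
        case False
        have "((\<lambda>n. (Ag (LL n) \<alpha> \<sigma> i k + Bg (LL n) \<alpha> \<sigma> (i - 1) k - Bg (LL n) \<alpha> \<sigma> i k)
         / (Gamma (2 - \<alpha>) * LL n (real i) (real i - 1))) \<longlongrightarrow>
         (Ag (\<lambda>x y. x - y) \<alpha> \<sigma> i k + Bg (\<lambda>x y. x - y) \<alpha> \<sigma> (i - 1) k - Bg (\<lambda>x y. x - y) \<alpha> \<sigma> i k)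
         / (Gamma (2 - \<alpha>) * (real i - (real i - 1)))) F"
          using s G k i i1 False by (intro tendsto_intros lim Ag_tendsto Bg_tendsto) auto
        then show ?thesis unfolding Cg_def using k i1 False by simp
      qed
    qed
  qed
qed


lemma logs_lim:
  fixes a0 T x y :: real
  assumes a0: "0 < a0" and aT: "a0 < T"
  shows "((\<lambda>N::nat. (a0 * real N / (T - a0)) * ln (tg a0 T N x / tg a0 T N y)) \<longlongrightarrow> x - y) at_top"
proof -
  define g where "g t = ln (a0 + x * t) - ln (a0 + y * t)" for t :: real
  define \<tau> where "\<tau> N = (T - a0) / real N" for N :: nat
  have "(g has_real_derivative (x / a0 - y / a0)) (at 0)"
    unfolding g_def[abs_def] using a0 by (auto intro!: derivative_eq_intros)
  then have d: "((\<lambda>t. (g t - g 0) / (t - 0)) \<longlongrightarrow> x / a0 - y / a0) (at 0)"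
    using has_field_derivative_iff by blast
  have t0: "(\<tau> \<longlongrightarrow> 0) at_top" unfolding \<tau>_def by (rule lim_const_over_n)
  have tne: "eventually (\<lambda>N. \<tau> N \<in> UNIV - {0}) at_top"
    using eventually_gt_at_top[of "0::nat"] by eventually_elim (use aT in \<open>simp add: \<tau>_def\<close>)
  have ft: "filterlim \<tau> (at 0) at_top"
    using t0 tne by (simp add: filterlim_at)
  have c: "((\<lambda>N. (g (\<tau> N) - g 0) / (\<tau> N - 0)) \<longlongrightarrow> x / a0 - y / a0) at_top"
    using filterlim_compose[OF d ft] by simp
  then have c2: "((\<lambda>N. a0 * ((g (\<tau> N) - g 0) / (\<tau> N - 0))) \<longlongrightarrow> a0 * (x / a0 - y / a0)) at_top"
    by (intro tendsto_intros)
  have e1: "eventually (\<lambda>N. 0 < a0 + x * \<tau> N) at_top"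
  proof -
    have "((\<lambda>N. a0 + x * \<tau> N) \<longlongrightarrow> a0 + x * 0) at_top" by (intro tendsto_intros t0)
    then show ?thesis using a0 order_tendstoD(1)[of "\<lambda>N. a0 + x * \<tau> N" "a0" at_top 0] by simp
  qed
  have e2: "eventually (\<lambda>N. 0 < a0 + y * \<tau> N) at_top"
  proof -
    have "((\<lambda>N. a0 + y * \<tau> N) \<longlongrightarrow> a0 + y * 0) at_top" by (intro tendsto_intros t0)
    then show ?thesis using a0 order_tendstoD(1)[of "\<lambda>N. a0 + y * \<tau> N" "a0" at_top 0] by simp
  qed
  have ev: "eventually (\<lambda>N. a0 * ((g (\<tau> N) - g 0) / (\<tau> N - 0)) = (a0 * real N / (T - a0)) * ln (tg a0 T N x / tg a0 T N y)) at_top"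
    using e1 e2 eventually_gt_at_top[of "0::nat"]
  proof eventually_elim
    case (elim N)
    have tx: "tg a0 T N x = a0 + x * \<tau> N" and ty: "tg a0 T N y = a0 + y * \<tau> N" by (simp_all add: tg_def \<tau>_def)
    have l: "ln (tg a0 T N x / tg a0 T N y) = g (\<tau> N)" unfolding tx ty g_def using elim by (simp add: ln_div)
    have g0: "g 0 = 0" by (simp add: g_def)
    have "a0 * ((g (\<tau> N) - g 0) / (\<tau> N - 0)) = (a0 / \<tau> N) * g (\<tau> N)" by (simp add: g0)
    also have "a0 / \<tau> N = a0 * real N / (T - a0)" using elim aT by (simp add: \<tau>_def)
    finally show ?case unfolding l .
  qed
  have "a0 * (x / a0 - y / a0) = x - y" using a0 by (simp add: field_simps)
  then show ?thesis using Lim_transform_eventually[OF c2 ev] by simp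
qed


lemma Ag0: "Ag (\<lambda>x y. x - y) \<alpha> \<sigma> i k = FF \<alpha> (real k + \<sigma> - real i + 1) - FF \<alpha> (real k + \<sigma> - real i)"
  unfolding Ag_def FF_def by (simp add: algebra_simps)

lemma Bg0: "Bg (\<lambda>x y. x - y) \<alpha> \<sigma> i k = bb \<alpha> (real k + \<sigma> - real i)"
  unfolding Bg_def bb_def FF_def GG_def by (simp add: algebra_simps)

context
  fixes \<alpha> \<sigma> :: real
  assumes a0: "0 < \<alpha>" and a1: "\<alpha> < 1" and s: "\<sigma> = 1 - \<alpha> / 2"
begin

abbreviation "c0 i k \<equiv> Cg (\<lambda>x y. x - y) \<alpha> \<sigma> i k"

lemma Gpos: "0 < Gamma (2 - \<alpha>)" using a1 by (simp add: Gamma_real_pos)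

lemma c0_first: "0 < k \<Longrightarrow> c0 1 k = (FF \<alpha> (real k + \<sigma> - 1 + 1) - FF \<alpha> (real k + \<sigma> - 1) - bb \<alpha> (real k + \<sigma> - 1)) / Gamma (2 - \<alpha>)"
  unfolding Cg_def Ag0 Bg0 by simp

lemma c0_mid: "2 \<le> i \<Longrightarrow> i \<le> k \<Longrightarrow> c0 i k = HH \<alpha> (real k + \<sigma> - real i) / Gamma (2 - \<alpha>)"
  unfolding Cg_def Ag0 Bg0 HH_def by (simp add: of_nat_diff algebra_simps)

lemma c0_last: "0 < k \<Longrightarrow> c0 (k+1) k = (bb \<alpha> \<sigma> + \<sigma> powr (1 - \<alpha>)) / Gamma (2 - \<alpha>)"
  unfolding Cg_def Ag0 Bg0 by simp

lemma c0_zero: "c0 1 0 = \<sigma> powr (1 - \<alpha>) / Gamma (2 - \<alpha>)"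
  unfolding Cg_def by simp

lemma spos: "0 < \<sigma>" "\<sigma> < 1" using s a0 a1 by auto

lemma first_HH: assumes r: "0 < r"
  shows "FF \<alpha> (r + 1) - FF \<alpha> r - bb \<alpha> r \<le> HH \<alpha> r"
  using bb_nonneg[OF a0 a1, of "r+1"] r unfolding HH_def by simp

lemma uni1: "0 < c0 1 k"
proof (cases "k = 0")
  case True
  then show ?thesis using c0_zero Gpos spos by simp
next
  case False
  define r where "r = real k + \<sigma> - 1"
  have r: "0 < r" using False spos by (simp add: r_def)
  have "GG \<alpha> (r + 1) - GG \<alpha> r < FF \<alpha> (r + 1)" using GG_diff[OF a0 a1 r] .
  moreover have "FF \<alpha> r < FF \<alpha> (r+1)" using FF_inc[OF a0 a1, of r "r+1"] r by simp
  ultimately have "0 < FF \<alpha> (r + 1) - FF \<alpha> r - bb \<alpha> r" unfolding bb_def by (simp add: field_simps)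
  then show ?thesis using c0_first[of k] False Gpos by (simp add: r_def)
qed

lemma uni2: assumes i: "1 \<le> i" "i < k" shows "c0 i k < c0 (i+1) k"
proof (cases "i = 1")
  case True
  define r where "r = real k + \<sigma> - 1"
  have r: "0 < r - 1" using i True spos by (simp add: r_def)
  have "c0 1 k = (FF \<alpha> (r + 1) - FF \<alpha> r - bb \<alpha> r) / Gamma (2 - \<alpha>)"
    using c0_first[of k] i by (simp add: r_def)
  also have "\<dots> \<le> HH \<alpha> r / Gamma (2 - \<alpha>)"
    using first_HH[of r] r Gpos by (simp add: divide_right_mono)
  also have "\<dots> < HH \<alpha> (r - 1) / Gamma (2 - \<alpha>)"
    using HH_dec[OF a0 a1 r, of r] Gpos by (simp add: divide_strict_right_mono)
  also have "\<dots> = c0 2 k" using c0_mid[of 2 k] i True by (simp add: r_def algebra_simps)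
  finally show ?thesis using True by (simp add: numeral_2_eq_2)
next
  case False
  have r: "0 < real k + \<sigma> - real (i+1)" using i spos by simp
  have "HH \<alpha> (real k + \<sigma> - real i) < HH \<alpha> (real k + \<sigma> - real (i+1))"
    using HH_dec[OF a0 a1 r, of "real k + \<sigma> - real i"] by simp
  then show ?thesis using c0_mid[of i k] c0_mid[of "i+1" k] i False Gpos
    by (simp add: divide_strict_right_mono)
qed

lemma uni3: assumes k: "0 < k" shows "\<sigma>^2 * c0 k k < (2*\<sigma> - 1) * c0 (k+1) k"
proof -
  have sp: "0 < \<sigma>" "\<sigma> < 1" using spos by auto
  have up: "c0 k k * Gamma (2 - \<alpha>) \<le> FF \<alpha> (\<sigma> + 1) - FF \<alpha> \<sigma>"
  proof (cases "k = 1")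
    case True
    then show ?thesis using c0_first[of 1] bb_nonneg[OF a0 a1 sp(1)] Gpos by simp
  next
    case False
    then have "c0 k k = HH \<alpha> \<sigma> / Gamma (2 - \<alpha>)" using c0_mid[of k k] k by simp
    then show ?thesis using bb_dec[OF a0 a1 sp(1)] Gpos unfolding HH_def by simp
  qed
  have "FF \<alpha> (\<sigma> + 1) - FF \<alpha> \<sigma> < 1 * ff \<alpha> \<sigma>" using FF_diff(2)[OF a0 a1 sp(1), of 1] by simp
  then have "c0 k k * Gamma (2 - \<alpha>) < (1 - \<alpha>) * \<sigma> powr (-\<alpha>)" using up by (simp add: ff_def)
  then have "\<sigma>^2 * (c0 k k * Gamma (2 - \<alpha>)) < \<sigma>^2 * ((1 - \<alpha>) * \<sigma> powr (-\<alpha>))"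
    using sp by (simp add: mult_strict_left_mono)
  also have "\<sigma>^2 * ((1 - \<alpha>) * \<sigma> powr (-\<alpha>)) = \<sigma> * ((1 - \<alpha>) * \<sigma> powr (1 - \<alpha>))"
    using powr_split1[OF sp(1), of \<alpha>] by (simp add: power2_eq_square)
  also have "\<dots> < (1 - \<alpha>) * \<sigma> powr (1 - \<alpha>)"
    using sp a1 by (simp add: mult_less_cancel_right1)
  also have "\<dots> \<le> (1 - \<alpha>) * (bb \<alpha> \<sigma> + \<sigma> powr (1 - \<alpha>))"
    using bb_nonneg[OF a0 a1 sp(1)] a1 by simp
  also have "\<dots> = ((2*\<sigma> - 1) * c0 (k+1) k) * Gamma (2 - \<alpha>)"
    using c0_last[OF k] Gpos s by simp
  finally have "\<sigma>^2 * c0 k k * Gamma (2 - \<alpha>) < ((2*\<sigma> - 1) * c0 (k+1) k) * Gamma (2 - \<alpha>)"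
    by (simp add: mult.assoc)
  then show ?thesis using Gpos by simp
qed

end


theorem lemma3p2:
  fixes a0 T \<alpha> \<sigma> :: real and k :: nat
  assumes "0 < a0" and "a0 < T"
    and "0 < \<alpha>" and "\<alpha> < 1"
    and "\<sigma> = 1 - \<alpha> / 2"
  shows "\<exists>\<tau>0 > 0. \<forall>N::nat. 0 < N \<and> k + 1 \<le> N \<and> (T - a0) / real N \<le> \<tau>0 \<longrightarrow>
     (\<forall>(a::real) (b::real) (M::nat) (v::nat \<Rightarrow> nat \<Rightarrow> real). a < b \<and> 0 < M \<longrightarrow>
        (\<Sum>i = 1..k + 1. ccoef a0 T N \<alpha> \<sigma> i k *
            ip1 a b M (\<lambda>j. v i j - v (i - 1) j) (\<lambda>j. \<sigma> * v (k + 1) j + (1 - \<sigma>) * v k j))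
        \<ge> 1 / 2 * (\<Sum>i = 1..k + 1. ccoef a0 T N \<alpha> \<sigma> i k *
            (nrm1sq a b M (v i) - nrm1sq a b M (v (i - 1)))))
   \<and> (\<forall>(L::real) (M::nat) (w::nat \<Rightarrow> nat \<Rightarrow> nat \<Rightarrow> real).
        0 < L \<and> 0 < M \<and> (\<forall>i \<le> k + 1. in_S0 M (w i)) \<longrightarrow>
        (\<Sum>i = 1..k + 1. ccoef a0 T N \<alpha> \<sigma> i k *
            ip2 L M (\<lambda>j l. w i j l - w (i - 1) j l) (\<lambda>j l. \<sigma> * w (k + 1) j l + (1 - \<sigma>) * w k j l))
        \<ge> 1 / 2 * (\<Sum>i = 1..k + 1. ccoef a0 T N \<alpha> \<sigma> i k *
            (nrm2sq L M (w i) - nrm2sq L M (w (i - 1)))))"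
proof -
  note a0 = assms(1) and aT = assms(2) and al0 = assms(3) and al1 = assms(4) and s = assms(5)
  have sp: "0 < \<sigma>" using s al1 by simp
  have a2: "\<alpha> < 2" using al1 by simp
  define lam where "lam N = a0 * real N / (T - a0)" for N :: nat
  define ell where "ell N x y = ln (tg a0 T N x / tg a0 T N y)" for N :: nat and x y :: real
  define LL where "LL N = (\<lambda>x y. lam N * ell N x y)" for N :: nat
  define c0 where "c0 i = Cg (\<lambda>x y. x - y) \<alpha> \<sigma> i k" for i
  have lim: "((\<lambda>N. LL N x y) \<longlongrightarrow> x - y) at_top" for x y
    unfolding LL_def lam_def ell_def using logs_lim[OF a0 aT] by simp
  have climN: "((\<lambda>N. Cg (LL N) \<alpha> \<sigma> i k) \<longlongrightarrow> c0 i) at_top" if "1 \<le> i" "i \<le> k + 1" for i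
    unfolding c0_def using Cg_tendsto[OF lim sp that a2] .
  have u1: "0 < c0 1" unfolding c0_def using uni1[OF al0 al1 s] .
  have u2: "c0 i < c0 (i+1)" if "1 \<le> i" "i < k" for i unfolding c0_def using uni2[OF al0 al1 s that] .
  have u3: "\<sigma>^2 * c0 k < (2*\<sigma> - 1) * c0 (k+1)" if "0 < k" unfolding c0_def using uni3[OF al0 al1 s that] .
  have E1: "eventually (\<lambda>N. 0 < Cg (LL N) \<alpha> \<sigma> 1 k) at_top"
    using order_tendstoD(1)[OF climN u1] by simp
  have E2: "eventually (\<lambda>N. \<forall>i\<in>{1..<k}. 0 < Cg (LL N) \<alpha> \<sigma> (i+1) k - Cg (LL N) \<alpha> \<sigma> i k) at_top"
  proof (rule eventually_ball_finite)
    show "finite {1..<k}" by simp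
    show "\<forall>i\<in>{1..<k}. eventually (\<lambda>N. 0 < Cg (LL N) \<alpha> \<sigma> (i+1) k - Cg (LL N) \<alpha> \<sigma> i k) at_top"
    proof
      fix i assume i: "i \<in> {1..<k}"
      have "((\<lambda>N. Cg (LL N) \<alpha> \<sigma> (i+1) k - Cg (LL N) \<alpha> \<sigma> i k) \<longlongrightarrow> c0 (i+1) - c0 i) at_top"
        using i by (intro tendsto_intros climN) auto
      moreover have "0 < c0 (i+1) - c0 i" using u2 i by auto
      ultimately show "eventually (\<lambda>N. 0 < Cg (LL N) \<alpha> \<sigma> (i+1) k - Cg (LL N) \<alpha> \<sigma> i k) at_top"
        by (rule order_tendstoD(1))
    qed
  qed
  have E3: "eventually (\<lambda>N. 0 < k \<longrightarrow> 0 < (2*\<sigma> - 1) * Cg (LL N) \<alpha> \<sigma> (k+1) k - \<sigma>^2 * Cg (LL N) \<alpha> \<sigma> k k) at_top"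
  proof (cases "k = 0")
    case False
    have "((\<lambda>N. (2*\<sigma> - 1) * Cg (LL N) \<alpha> \<sigma> (k+1) k - \<sigma>^2 * Cg (LL N) \<alpha> \<sigma> k k) \<longlongrightarrow>
       (2*\<sigma> - 1) * c0 (k+1) - \<sigma>^2 * c0 k) at_top"
      using False by (intro tendsto_intros climN) auto
    moreover have "0 < (2*\<sigma> - 1) * c0 (k+1) - \<sigma>^2 * c0 k" using u3 False by auto
    ultimately show ?thesis using order_tendstoD(1) by fastforce
  qed simp
  have E4: "eventually (\<lambda>N. Cond \<sigma> k (\<lambda>i. ccoef a0 T N \<alpha> \<sigma> i k)) at_top"
    using E1 E2 E3 eventually_gt_at_top[of "0::nat"]
  proof eventually_elim
    case (elim N)
    have lp: "0 < lam N" using elim a0 aT by (simp add: lam_def)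
    have ellpos: "0 < ell N x y" if "0 \<le> y" "y < x" for x y
    proof -
      have t: "0 < (T - a0) / real N" using elim aT by simp
      have "0 \<le> y * ((T - a0) / real N)" using t that by (intro mult_nonneg_nonneg) auto
      then have p1: "0 < tg a0 T N y" using a0 unfolding tg_def by linarith
      have "y * ((T - a0) / real N) < x * ((T - a0) / real N)" using t that by (intro mult_strict_right_mono) auto
      then have p2: "tg a0 T N y < tg a0 T N x" unfolding tg_def by linarith
      show ?thesis unfolding ell_def using p1 p2 by simp
    qed
    define q where "q = lam N powr (-\<alpha>)"
    have qp: "0 < q" using lp by (simp add: q_def)
    have cc: "ccoef a0 T N \<alpha> \<sigma> i k = Cg (LL N) \<alpha> \<sigma> i k / q" if "1 \<le> i" "i \<le> k + 1" for i
    proof -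
      have "Cg (LL N) \<alpha> \<sigma> i k = q * Cg (ell N) \<alpha> \<sigma> i k"
        unfolding LL_def q_def by (rule Cg_scale[OF lp sp that ellpos a2])
      moreover have "ccoef a0 T N \<alpha> \<sigma> i k = Cg (ell N) \<alpha> \<sigma> i k"
        unfolding ccoef_Cg ell_def by simp
      ultimately show ?thesis using qp by simp
    qed
    have c1: "0 \<le> ccoef a0 T N \<alpha> \<sigma> 1 k" using cc[of 1] elim qp by simp
    have c2: "ccoef a0 T N \<alpha> \<sigma> i k \<le> ccoef a0 T N \<alpha> \<sigma> (i+1) k" if "1 \<le> i" "i < k" for i
    proof -
      have "Cg (LL N) \<alpha> \<sigma> i k / q \<le> Cg (LL N) \<alpha> \<sigma> (i+1) k / q"
      proof -
        have "Cg (LL N) \<alpha> \<sigma> i k < Cg (LL N) \<alpha> \<sigma> (i+1) k" using elim(2) that by auto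
        then show ?thesis using qp by (intro divide_right_mono) auto
      qed
      then show ?thesis using cc[of i] cc[of "i+1"] that by simp
    qed
    have c3: "(if k = 0 then 0 else \<sigma>^2 * ccoef a0 T N \<alpha> \<sigma> k k) \<le> (2*\<sigma> - 1) * ccoef a0 T N \<alpha> \<sigma> (k+1) k"
    proof (cases "k = 0")
      case True
      then show ?thesis using c1 s al1 by simp
    next
      case False
      then have "\<sigma>^2 * Cg (LL N) \<alpha> \<sigma> k k / q \<le> (2*\<sigma> - 1) * Cg (LL N) \<alpha> \<sigma> (k+1) k / q"
        using elim(3) qp by (intro divide_right_mono) auto
      then show ?thesis using cc[of k] cc[of "k+1"] False by simp
    qed
    show ?case unfolding Cond_def using c1 c2 c3 by blast
  qed
  then obtain N0 where N0: "\<And>N. N \<ge> N0 \<Longrightarrow> Cond \<sigma> k (\<lambda>i. ccoef a0 T N \<alpha> \<sigma> i k)"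
    unfolding eventually_at_top_linorder by blast
  define M0 where "M0 = max N0 1"
  have M0: "0 < real M0" by (simp add: M0_def)
  have key: "Cond \<sigma> k (\<lambda>i. ccoef a0 T N \<alpha> \<sigma> i k)"
    if H: "0 < N \<and> k + 1 \<le> N \<and> (T - a0) / real N \<le> (T - a0) / real M0" for N
  proof -
    have "real M0 \<le> real N"
    proof -
      have "(T - a0) / real N \<le> (T - a0) / real M0" using H by simp
      show ?thesis
      proof (rule ccontr)
        assume "\<not> real M0 \<le> real N"
        then have "real N < real M0" by simp
        then have "(T - a0) / real M0 < (T - a0) / real N"
          using H aT by (intro divide_strict_left_mono) auto
        with \<open>(T - a0) / real N \<le> (T - a0) / real M0\<close> show False by simp
      qed
    qed
    then have "N \<ge> N0" by (simp add: M0_def)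
    then show ?thesis by (rule N0)
  qed
  have tp: "0 < (T - a0) / real M0" using aT M0 by simp
  show ?thesis
    apply (rule exI[of _ "(T - a0) / real M0"])
    apply (intro conjI allI impI)
      apply (rule tp)
     apply (rule grid1[OF key]; simp)
    apply (rule grid2[OF key]; simp)
    done
qed

end
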